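(* Let $k=\mathbb{F}_3$, let $O_7(k)$ be the group of $7\times7$ matrices over $k$ orthogonal for the bilinear form $\langle x,y\rangle=x_1y_7+x_2y_6+\dots+x_7y_1$ on $k^7$, and let \[ A=\begin{pmatrix} 0&0&1&0&0&1&0\\ 1&0&0&0&0&0&1\\ 0&1&0&0&0&0&0\\ 0&0&0&0&0&0&0\\ 0&1&0&0&0&0&1\\ 0&0&1&0&1&0&0\\ 0&0&0&0&0&1&0 \end{pmatrix}. \] Then there is no $g\in O_7(k)$ such that $M=g^{-1}Ag$ satisfies $M_{ij}=0$ for all $i\in\{5,6,7\}$ and $j\in\{1,2,3\}$.
   Context: $M_{ij}$ denotes the entry in row $i$ and column $j$. *)

theory Defs
  imports "Jordan_Normal_Form.Matrix" "Berlekamp_Zassenhaus.Finite_Field"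
begin

text \<open>An auxiliary three-element type; the field k = F_3 is rendered as
  the prime field \<open>three mod_ring\<close> (integers modulo CARD(three) = 3).\<close>

typedef three = "{0::nat, 1, 2}" by auto

lemma card_three: "CARD(three) = 3"
  using type_definition.card[OF type_definition_three] by simp

instance three :: finite
proof
  show "finite (UNIV :: three set)"
    using type_definition_three finite_imageI
    by (metis Abs_three_cases finite.emptyI finite_insert finite_subset subsetI
        type_definition.Abs_image)
qed

instance three :: prime_card
  by standard (simp add: card_three)

type_synonym F3 = "three mod_ring"

text \<open>The Gram matrix of the bilinear form
  x_1 y_7 + x_2 y_6 + ... + x_7 y_1 (0-indexed: entry (i,j) is 1 iff i + j = 6).\<close>
definition J7 :: "F3 mat" where
  "J7 = mat 7 7 (\<lambda>(i, j). if i + j = 6 then 1 else 0)"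

definition O7 :: "F3 mat set" where
  "O7 = {g \<in> carrier_mat 7 7. transpose_mat g * J7 * g = J7}"

definition A7 :: "F3 mat" where
  "A7 = mat_of_rows_list 7
    [[0,0,1,0,0,1,0],
     [1,0,0,0,0,0,1],
     [0,1,0,0,0,0,0],
     [0,0,0,0,0,0,0],
     [0,1,0,0,0,0,1],
     [0,0,1,0,1,0,0],
     [0,0,0,0,0,1,0]]"

end

theory Submission
  imports Defs
begin
lemma CHAR_F3: "CHAR(F3) = 3" by (simp add: card_three)
lemma F3_of_int_eq0: "(of_int k :: F3) = 0 \<longleftrightarrow> k mod 3 = 0"
  using of_int_eq_0_iff_char_dvd[where 'a=F3, of k] by (simp add: card_three dvd_eq_mod_eq_0)
lemma F3_cases: "\<exists>a::int. a \<in> {0,1,2} \<and> (x::F3) = of_int a"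
proof -
  obtain i where i: "i < 3" "x = of_nat i" using surj_of_nat_mod_ring[of x] card_three by auto
  have "int i \<in> {0,1,2}" using i(1) by auto
  moreover have "x = of_int (int i)" using i(2) by simp
  ultimately show ?thesis by blast
qed

definition bf :: "F3 vec \<Rightarrow> F3 vec \<Rightarrow> F3" where
  "bf x y = (\<Sum>i<7. x$i * y$(6-i))"

lemma bf_expand: "bf x y = x$0*y$6 + x$1*y$5 + x$2*y$4 + x$3*y$3 + x$4*y$2 + x$5*y$1 + x$6*y$0"
  by (simp add: bf_def eval_nat_numeral algebra_simps)

lemma lt7: "(i::nat) < 7 \<Longrightarrow> i = 0 \<or> i = 1 \<or> i = 2 \<or> i = 3 \<or> i = 4 \<or> i = 5 \<or> i = 6"
  by auto

lemma sum7: "(\<Sum>j\<in>{0..<7::nat}. f j) = f 0 + f 1 + f 2 + f 3 + f 4 + f 5 + (f 6 :: 'a::comm_monoid_add)"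
  by (simp add: eval_nat_numeral atLeast0LessThan algebra_simps)

lemma A7_carrier: "A7 \<in> carrier_mat 7 7" unfolding A7_def mat_of_rows_list_def
  by (rule carrier_matI) simp_all

lemma J7_carrier: "J7 \<in> carrier_mat 7 7" unfolding J7_def by (rule mat_carrier)

lemma mult7: assumes "M \<in> carrier_mat 7 7" "v \<in> carrier_vec 7" "i < 7"
  shows "(M *\<^sub>v v) $ i = M$$(i,0)*v$0 + M$$(i,1)*v$1 + M$$(i,2)*v$2 + M$$(i,3)*v$3 + M$$(i,4)*v$4 + M$$(i,5)*v$5 + M$$(i,6)*v$6"
  using assms by (simp add: scalar_prod_def sum7)

lemma A7_mult: assumes "s \<in> carrier_vec 7"
  shows "A7 *\<^sub>v s = vec 7 (\<lambda>i. [s$2+s$5, s$0+s$6, s$1, 0, s$1+s$6, s$2+s$4, s$5] ! i)"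
proof (rule eq_vecI)
  fix i assume "i < dim_vec (vec 7 (\<lambda>i. [s$2+s$5, s$0+s$6, s$1, 0, s$1+s$6, s$2+s$4, s$5] ! i))"
  then have i: "i < 7" by simp
  have "(A7 *\<^sub>v s) $ i = A7$$(i,0)*s$0 + A7$$(i,1)*s$1 + A7$$(i,2)*s$2 + A7$$(i,3)*s$3 + A7$$(i,4)*s$4 + A7$$(i,5)*s$5 + A7$$(i,6)*s$6"
    by (rule mult7[OF A7_carrier assms i])
  also have "\<dots> = [s$2+s$5, s$0+s$6, s$1, 0, s$1+s$6, s$2+s$4, s$5] ! i"
    using i by (elim lt7[elim_format] disjE) (simp_all add: A7_def mat_of_rows_list_def eval_nat_numeral)
  finally show "(A7 *\<^sub>v s) $ i = vec 7 (\<lambda>i. [s$2+s$5, s$0+s$6, s$1, 0, s$1+s$6, s$2+s$4, s$5] ! i) $ i"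
    by (simp only: index_vec[OF i])
qed (simp add: carrier_matD[OF A7_carrier])

lemma J7_mult: assumes "y \<in> carrier_vec 7"
  shows "J7 *\<^sub>v y = vec 7 (\<lambda>i. y$(6-i))"
proof (rule eq_vecI)
  fix i assume "i < dim_vec (vec 7 (\<lambda>i. y$(6-i)))"
  then have i: "i < 7" by simp
  have "(J7 *\<^sub>v y) $ i = J7$$(i,0)*y$0 + J7$$(i,1)*y$1 + J7$$(i,2)*y$2 + J7$$(i,3)*y$3 + J7$$(i,4)*y$4 + J7$$(i,5)*y$5 + J7$$(i,6)*y$6"
    by (rule mult7[OF J7_carrier assms i])
  also have "\<dots> = y$(6-i)"
    using i by (elim lt7[elim_format] disjE) (simp_all add: J7_def)
  finally show "(J7 *\<^sub>v y) $ i = vec 7 (\<lambda>i. y$(6-i)) $ i"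
    by (simp only: index_vec[OF i])
qed (simp add: carrier_matD[OF J7_carrier])

lemma bf_J: assumes "x \<in> carrier_vec 7" "y \<in> carrier_vec 7"
  shows "x \<bullet> (J7 *\<^sub>v y) = bf x y"
  using assms by (simp add: J7_mult scalar_prod_def bf_def atLeast0LessThan)

lemma brute:
  fixes a0 a1 a2 a4 a5 a6 :: int
  assumes r: "a0 \<in> {0,1,2}" "a1 \<in> {0,1,2}" "a2 \<in> {0,1,2}" "a4 \<in> {0,1,2}" "a5 \<in> {0,1,2}" "a6 \<in> {0,1,2}"
  and q: "(a0*a6 + a1*a5 + a2*a4) mod 3 \<noteq> 2"
   "(2*a0*a5 + 2*a1*a2 + 2*a1*a4 + 2*a2*a6 + 2*a5*a6) mod 3 = 0"
   "(2*a0*a2 + 2*a0*a4 + 2*a1*a1 + 2*a1*a6 + 2*a2*a5 + 2*a2*a6 + 2*a4*a6 + 2*a5*a5) mod 3 = 0"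
   "(4*a0*a1 + 2*a0*a6 + 2*a1*a5 + 4*a1*a6 + 2*a2*a2 + 2*a2*a4 + 4*a2*a5 + 4*a4*a5 + 2*a6*a6) mod 3 = 0"
   "(2*a0*a0 + 2*a0*a5 + 4*a0*a6 + 6*a1*a2 + 2*a1*a4 + 8*a1*a5 + 2*a2*a2 + 4*a2*a4 + 2*a2*a6 + 2*a4*a4 + 6*a5*a6 + 2*a6*a6) mod 3 = 0"
  shows "a0 = 0 \<and> a1 = 0 \<and> a2 = 0 \<and> a4 = 0 \<and> a5 = 0 \<and> a6 = 0"
proof -
  have all:
    "\<forall>a0\<in>{0::int,1,2}. \<forall>a1\<in>{0::int,1,2}. \<forall>a2\<in>{0::int,1,2}. \<forall>a4\<in>{0::int,1,2}. \<forall>a5\<in>{0::int,1,2}. \<forall>a6\<in>{0::int,1,2}.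
     (a0*a6 + a1*a5 + a2*a4) mod 3 \<noteq> 2 \<longrightarrow>
     (2*a0*a5 + 2*a1*a2 + 2*a1*a4 + 2*a2*a6 + 2*a5*a6) mod 3 = 0 \<longrightarrow>
     (2*a0*a2 + 2*a0*a4 + 2*a1*a1 + 2*a1*a6 + 2*a2*a5 + 2*a2*a6 + 2*a4*a6 + 2*a5*a5) mod 3 = 0 \<longrightarrow>
     (4*a0*a1 + 2*a0*a6 + 2*a1*a5 + 4*a1*a6 + 2*a2*a2 + 2*a2*a4 + 4*a2*a5 + 4*a4*a5 + 2*a6*a6) mod 3 = 0 \<longrightarrow>
     (2*a0*a0 + 2*a0*a5 + 4*a0*a6 + 6*a1*a2 + 2*a1*a4 + 8*a1*a5 + 2*a2*a2 + 4*a2*a4 + 2*a2*a6 + 2*a4*a4 + 6*a5*a6 + 2*a6*a6) mod 3 = 0 \<longrightarrow>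
     a0 = 0 \<and> a1 = 0 \<and> a2 = 0 \<and> a4 = 0 \<and> a5 = 0 \<and> a6 = 0"
    by code_simp
  show ?thesis by (rule all[rule_format, OF r q])
qed

lemma aux3: "(2*S + a*a) mod 3 = 0 \<Longrightarrow> a \<in> {0,1,2} \<Longrightarrow> S mod 3 \<noteq> (2::int)"
  by (elim insertE emptyE; simp; presburger)

lemma finite_part:
  assumes s: "s \<in> carrier_vec 7"
  and h: "bf s s = 0" "bf s (A7 *\<^sub>v s) = 0" "bf s (A7 *\<^sub>v (A7 *\<^sub>v s)) = 0"
     "bf (A7 *\<^sub>v s) (A7 *\<^sub>v (A7 *\<^sub>v s)) = 0" "bf (A7 *\<^sub>v (A7 *\<^sub>v s)) (A7 *\<^sub>v (A7 *\<^sub>v s)) = 0"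
  shows "s = 0\<^sub>v 7"
proof -
  obtain a0 where a0: "a0 \<in> {0,1,2}" "s$0 = of_int a0" using F3_cases by blast
  obtain a1 where a1: "a1 \<in> {0,1,2}" "s$1 = of_int a1" using F3_cases by blast
  obtain a2 where a2: "a2 \<in> {0,1,2}" "s$2 = of_int a2" using F3_cases by blast
  obtain a3 where a3: "a3 \<in> {0,1,2}" "s$3 = of_int a3" using F3_cases by blast
  obtain a4 where a4: "a4 \<in> {0,1,2}" "s$4 = of_int a4" using F3_cases by blast
  obtain a5 where a5: "a5 \<in> {0,1,2}" "s$5 = of_int a5" using F3_cases by blast
  obtain a6 where a6: "a6 \<in> {0,1,2}" "s$6 = of_int a6" using F3_cases by blast
  define t1 where "t1 = A7 *\<^sub>v s"
  define t2 where "t2 = A7 *\<^sub>v t1"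
  have t1c: "t1 \<in> carrier_vec 7" unfolding t1_def using s A7_carrier by simp
  have t1e: "t1$0 = s$2+s$5" "t1$1 = s$0+s$6" "t1$2 = s$1" "t1$3 = of_int 0" "t1$4 = s$1+s$6" "t1$5 = s$2+s$4" "t1$6 = s$5"
    unfolding t1_def A7_mult[OF s] by simp_all
  have t2e: "t2$0 = t1$2+t1$5" "t2$1 = t1$0+t1$6" "t2$2 = t1$1" "t2$3 = of_int 0" "t2$4 = t1$1+t1$6" "t2$5 = t1$2+t1$4" "t2$6 = t1$5"
    unfolding t2_def A7_mult[OF t1c] by simp_all
  note ev = t2e t1e a0(2) a1(2) a2(2) a3(2) a4(2) a5(2) a6(2)
  have e00: "bf s s = of_int (2*a0*a6 + 2*a1*a5 + 2*a2*a4 + a3*a3)"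
    unfolding bf_expand ev of_int_mult[symmetric] of_int_add[symmetric]
    by (rule arg_cong[where f=of_int]) (simp add: algebra_simps)
  have e01: "bf s t1 = of_int (2*a0*a5 + 2*a1*a2 + 2*a1*a4 + 2*a2*a6 + 2*a5*a6)"
    unfolding bf_expand ev of_int_mult[symmetric] of_int_add[symmetric]
    by (rule arg_cong[where f=of_int]) (simp add: algebra_simps)
  have e02: "bf s t2 = of_int (2*a0*a2 + 2*a0*a4 + 2*a1*a1 + 2*a1*a6 + 2*a2*a5 + 2*a2*a6 + 2*a4*a6 + 2*a5*a5)"
    unfolding bf_expand ev of_int_mult[symmetric] of_int_add[symmetric]
    by (rule arg_cong[where f=of_int]) (simp add: algebra_simps)
  have e12: "bf t1 t2 = of_int (4*a0*a1 + 2*a0*a6 + 2*a1*a5 + 4*a1*a6 + 2*a2*a2 + 2*a2*a4 + 4*a2*a5 + 4*a4*a5 + 2*a6*a6)"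
    unfolding bf_expand ev of_int_mult[symmetric] of_int_add[symmetric]
    by (rule arg_cong[where f=of_int]) (simp add: algebra_simps)
  have e22: "bf t2 t2 = of_int (2*a0*a0 + 2*a0*a5 + 4*a0*a6 + 6*a1*a2 + 2*a1*a4 + 8*a1*a5 + 2*a2*a2 + 4*a2*a4 + 2*a2*a6 + 2*a4*a4 + 6*a5*a6 + 2*a6*a6)"
    unfolding bf_expand ev of_int_mult[symmetric] of_int_add[symmetric]
    by (rule arg_cong[where f=of_int]) (simp add: algebra_simps)
  have m00: "(2*a0*a6 + 2*a1*a5 + 2*a2*a4 + a3*a3) mod 3 = 0"
    using h(1) e00 F3_of_int_eq0 by metis
  have m01: "(2*a0*a5 + 2*a1*a2 + 2*a1*a4 + 2*a2*a6 + 2*a5*a6) mod 3 = 0"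
    using h(2) e01 F3_of_int_eq0 unfolding t1_def by metis
  have m02: "(2*a0*a2 + 2*a0*a4 + 2*a1*a1 + 2*a1*a6 + 2*a2*a5 + 2*a2*a6 + 2*a4*a6 + 2*a5*a5) mod 3 = 0"
    using h(3) e02 F3_of_int_eq0 unfolding t1_def t2_def by metis
  have m12: "(4*a0*a1 + 2*a0*a6 + 2*a1*a5 + 4*a1*a6 + 2*a2*a2 + 2*a2*a4 + 4*a2*a5 + 4*a4*a5 + 2*a6*a6) mod 3 = 0"
    using h(4) e12 F3_of_int_eq0 unfolding t1_def t2_def by metis
  have m22: "(2*a0*a0 + 2*a0*a5 + 4*a0*a6 + 6*a1*a2 + 2*a1*a4 + 8*a1*a5 + 2*a2*a2 + 4*a2*a4 + 2*a2*a6 + 2*a4*a4 + 6*a5*a6 + 2*a6*a6) mod 3 = 0"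
    using h(5) e22 F3_of_int_eq0 unfolding t1_def t2_def by metis
  have ne2: "(a0*a6 + a1*a5 + a2*a4) mod 3 \<noteq> 2"
  proof -
    have "2*a0*a6 + 2*a1*a5 + 2*a2*a4 + a3*a3 = 2*(a0*a6 + a1*a5 + a2*a4) + a3*a3"
      by (simp add: algebra_simps)
    then show ?thesis using aux3[OF _ a3(1)] m00 by metis
  qed
  have z: "a0 = 0 \<and> a1 = 0 \<and> a2 = 0 \<and> a4 = 0 \<and> a5 = 0 \<and> a6 = 0"
    by (rule brute[OF a0(1) a1(1) a2(1) a4(1) a5(1) a6(1) ne2 m01 m02 m12 m22])
  have "a3 = 0" using a3(1) m00 z by (elim insertE emptyE) simp_all
  then have "\<forall>i<7. s$i = 0" using z ev by (auto dest!: lt7)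
  then show ?thesis using s by (intro eq_vecI) auto
qed

lemma two_eqs:
  fixes a0 a1 a2 b0 b1 b2 :: "'a::field"
  shows "\<exists>c0 c1 c2. \<not> (c0 = 0 \<and> c1 = 0 \<and> c2 = 0) \<and>
           a0*c0 + a1*c1 + a2*c2 = 0 \<and> b0*c0 + b1*c1 + b2*c2 = 0"
proof (cases "a1*b2 - a2*b1 = 0 \<and> a2*b0 - a0*b2 = 0 \<and> a0*b1 - a1*b0 = 0")
  case False
  have "a0*(a1*b2 - a2*b1) + a1*(a2*b0 - a0*b2) + a2*(a0*b1 - a1*b0) = 0"
    by (simp add: algebra_simps)
  moreover have "b0*(a1*b2 - a2*b1) + b1*(a2*b0 - a0*b2) + b2*(a0*b1 - a1*b0) = 0"
    by (simp add: algebra_simps)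
  ultimately show ?thesis using False by blast
next
  case True
  show ?thesis
  proof (cases "a0 \<noteq> 0 \<or> a1 \<noteq> 0")
    case True2: True
    have "a0*a1 + a1*(-a0) + a2*0 = 0" by (simp add: algebra_simps)
    moreover have "b0*a1 + b1*(-a0) + b2*0 = 0" using True by (simp add: algebra_simps)
    ultimately show ?thesis using True2 by (intro exI[of _ a1] exI[of _ "-a0"] exI[of _ 0]) auto
  next
    case False2: False
    show ?thesis
    proof (cases "a2 = 0")
      case a2: True
      show ?thesis
      proof (cases "b0 \<noteq> 0 \<or> b1 \<noteq> 0")
        case True3: True
        have "b0*b1 + b1*(-b0) + b2*0 = 0" by (simp add: algebra_simps)
        then show ?thesis using True3 False2 a2 by (intro exI[of _ b1] exI[of _ "-b0"] exI[of _ 0]) auto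
      next
        case False3: False
        then show ?thesis using False2 a2 by (intro exI[of _ 1] exI[of _ 0] exI[of _ 0]) auto
      qed
    next
      case a2: False
      have "a2*b0 = 0" using True False2 by simp
      then have "b0 = 0" using a2 by simp
      then show ?thesis using False2 by (intro exI[of _ 1] exI[of _ 0] exI[of _ 0]) auto
    qed
  qed
qed

lemma bf_g:
  assumes g: "g \<in> carrier_mat 7 7" and gJ: "transpose_mat g * J7 * g = J7"
    and p: "p \<in> carrier_vec 7" and q: "q \<in> carrier_vec 7"
  shows "bf (g *\<^sub>v p) (g *\<^sub>v q) = bf p q"
proof -
  have gp: "g *\<^sub>v p \<in> carrier_vec 7" using g p by simp
  have gq: "g *\<^sub>v q \<in> carrier_vec 7" using g q by simp
  have Jgq: "J7 *\<^sub>v (g *\<^sub>v q) \<in> carrier_vec 7" using J7_carrier gq by simp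
  have "bf (g *\<^sub>v p) (g *\<^sub>v q) = (g *\<^sub>v p) \<bullet> (J7 *\<^sub>v (g *\<^sub>v q))"
    using bf_J[OF gp gq] by simp
  also have "\<dots> = (J7 *\<^sub>v (g *\<^sub>v q)) \<bullet> (g *\<^sub>v p)"
    by (rule comm_scalar_prod[OF gp Jgq])
  also have "\<dots> = (transpose_mat g *\<^sub>v (J7 *\<^sub>v (g *\<^sub>v q))) \<bullet> p"
    by (rule transpose_vec_mult_scalar[OF g p Jgq, symmetric])
  also have "transpose_mat g *\<^sub>v (J7 *\<^sub>v (g *\<^sub>v q)) = (transpose_mat g * J7 * g) *\<^sub>v q"
  proof -
    have gT: "transpose_mat g \<in> carrier_mat 7 7" using g by simp
    have c1: "transpose_mat g * J7 \<in> carrier_mat 7 7" by (rule mult_carrier_mat[OF gT J7_carrier])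
    have "(transpose_mat g * J7 * g) *\<^sub>v q = (transpose_mat g * J7) *\<^sub>v (g *\<^sub>v q)"
      by (rule assoc_mult_mat_vec[OF c1 g q])
    also have "\<dots> = transpose_mat g *\<^sub>v (J7 *\<^sub>v (g *\<^sub>v q))"
      by (rule assoc_mult_mat_vec[OF gT J7_carrier gq])
    finally show ?thesis by simp
  qed
  also have "\<dots> = J7 *\<^sub>v q" using gJ by simp
  also have "(J7 *\<^sub>v q) \<bullet> p = p \<bullet> (J7 *\<^sub>v q)"
    using J7_carrier q p by (intro comm_scalar_prod[of _ 7]) auto
  also have "\<dots> = bf p q" by (rule bf_J[OF p q])
  finally show ?thesis .
qed

lemma bf_supp:
  assumes "p$3 = 0" "p$4 = 0" "p$5 = 0" "p$6 = 0" "q$4 = 0" "q$5 = 0" "q$6 = 0"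
  shows "bf p q = 0"
  using assms by (simp add: bf_expand)

theorem lemma2p6:
  shows "\<not> (\<exists>g \<in> O7. \<exists>ginv \<in> carrier_mat 7 7.
            ginv * g = 1\<^sub>m 7 \<and> g * ginv = 1\<^sub>m 7 \<and>
            (\<forall>i \<in> {4, 5, 6}. \<forall>j \<in> {0, 1, 2}. (ginv * A7 * g) $$ (i, j) = 0))"
proof
  assume "\<exists>g \<in> O7. \<exists>ginv \<in> carrier_mat 7 7.
            ginv * g = 1\<^sub>m 7 \<and> g * ginv = 1\<^sub>m 7 \<and>
            (\<forall>i \<in> {4, 5, 6}. \<forall>j \<in> {0, 1, 2}. (ginv * A7 * g) $$ (i, j) = 0)"
  then obtain g ginv where gO: "g \<in> O7" and gi: "ginv \<in> carrier_mat 7 7"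
    and l: "ginv * g = 1\<^sub>m 7" and r: "g * ginv = 1\<^sub>m 7"
    and z: "\<forall>i \<in> {4, 5, 6}. \<forall>j \<in> {0, 1, 2}. (ginv * A7 * g) $$ (i, j) = 0"
    by blast
  have g: "g \<in> carrier_mat 7 7" and gJ: "transpose_mat g * J7 * g = J7"
    using gO unfolding O7_def by auto
  define M where "M = ginv * A7 * g"
  have M: "M \<in> carrier_mat 7 7" using gi A7_carrier g by (simp add: M_def)
  have Mz: "M$$(i,j) = 0" if "i \<in> {4,5,6}" "j \<in> {0,1,2}" for i j
    using z that unfolding M_def by blast
  have Av: "A7 *\<^sub>v (g *\<^sub>v v) = g *\<^sub>v (M *\<^sub>v v)" if v: "v \<in> carrier_vec 7" for v
  proof -
    have w: "A7 *\<^sub>v (g *\<^sub>v v) \<in> carrier_vec 7" using A7_carrier g v by simp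
    have gv: "g *\<^sub>v v \<in> carrier_vec 7" using g v by simp
    have c1: "ginv * A7 \<in> carrier_mat 7 7" by (rule mult_carrier_mat[OF gi A7_carrier])
    have "M *\<^sub>v v = (ginv * A7) *\<^sub>v (g *\<^sub>v v)"
      unfolding M_def by (rule assoc_mult_mat_vec[OF c1 g v])
    also have "\<dots> = ginv *\<^sub>v (A7 *\<^sub>v (g *\<^sub>v v))"
      by (rule assoc_mult_mat_vec[OF gi A7_carrier gv])
    finally have "g *\<^sub>v (M *\<^sub>v v) = g *\<^sub>v (ginv *\<^sub>v (A7 *\<^sub>v (g *\<^sub>v v)))" by simp
    also have "\<dots> = (g * ginv) *\<^sub>v (A7 *\<^sub>v (g *\<^sub>v v))"
      by (rule assoc_mult_mat_vec[OF g gi w, symmetric])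
    also have "\<dots> = A7 *\<^sub>v (g *\<^sub>v v)" using r w by simp
    finally show ?thesis by simp
  qed
  define R0 where "R0 = M$$(3,0)*M$$(0,0) + M$$(3,1)*M$$(1,0) + M$$(3,2)*M$$(2,0)"
  define R1 where "R1 = M$$(3,0)*M$$(0,1) + M$$(3,1)*M$$(1,1) + M$$(3,2)*M$$(2,1)"
  define R2 where "R2 = M$$(3,0)*M$$(0,2) + M$$(3,1)*M$$(1,2) + M$$(3,2)*M$$(2,2)"
  obtain c0 c1 c2 where cnz: "\<not> (c0 = 0 \<and> c1 = 0 \<and> c2 = 0)"
    and e1: "M$$(3,0)*c0 + M$$(3,1)*c1 + M$$(3,2)*c2 = 0"
    and e2: "R0*c0 + R1*c1 + R2*c2 = 0"
    using two_eqs[of "M$$(3,0)" "M$$(3,1)" "M$$(3,2)" R0 R1 R2] by blast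
  define cv :: "F3 vec" where "cv = vec 7 (\<lambda>i. if i = 0 then c0 else if i = 1 then c1 else if i = 2 then c2 else 0)"
  have cvc: "cv \<in> carrier_vec 7" by (simp add: cv_def)
  have cve: "cv$0 = c0" "cv$1 = c1" "cv$2 = c2" "cv$3 = 0" "cv$4 = 0" "cv$5 = 0" "cv$6 = 0"
    by (simp_all add: cv_def)
  define m1 where "m1 = M *\<^sub>v cv"
  define m2 where "m2 = M *\<^sub>v m1"
  have m1c: "m1 \<in> carrier_vec 7" using M cvc by (simp add: m1_def)
  have m2c: "m2 \<in> carrier_vec 7" using M m1c by (simp add: m2_def)
  have m1e: "m1$i = M$$(i,0)*c0 + M$$(i,1)*c1 + M$$(i,2)*c2" if "i < 7" for i
    using mult7[OF M cvc that] cve unfolding m1_def by simp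
  have m1z: "m1$3 = 0" "m1$4 = 0" "m1$5 = 0" "m1$6 = 0"
    using m1e[of 3] e1 m1e[of 4] m1e[of 5] m1e[of 6] Mz by simp_all
  have m2e: "m2$i = M$$(i,0)*m1$0 + M$$(i,1)*m1$1 + M$$(i,2)*m1$2" if "i < 7" for i
    using mult7[OF M m1c that] m1z unfolding m2_def by simp
  have "m2$3 = R0*c0 + R1*c1 + R2*c2"
    unfolding m2e[of 3, simplified] m1e[of 0, simplified] m1e[of 1, simplified] m1e[of 2, simplified]
      R0_def R1_def R2_def
    by (simp add: algebra_simps)
  then have m2z: "m2$3 = 0" "m2$4 = 0" "m2$5 = 0" "m2$6 = 0"
    using e2 m2e[of 4] m2e[of 5] m2e[of 6] Mz by simp_all
  define s where "s = g *\<^sub>v cv"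
  have sc: "s \<in> carrier_vec 7" using g cvc by (simp add: s_def)
  have s1: "A7 *\<^sub>v s = g *\<^sub>v m1" unfolding s_def m1_def by (rule Av[OF cvc])
  have s2: "A7 *\<^sub>v (A7 *\<^sub>v s) = g *\<^sub>v m2" unfolding s1 m2_def by (rule Av[OF m1c])
  have B: "bf (g *\<^sub>v p) (g *\<^sub>v q) = 0"
    if "p \<in> carrier_vec 7" "q \<in> carrier_vec 7" "p$3 = 0" "p$4 = 0" "p$5 = 0" "p$6 = 0" "q$4 = 0" "q$5 = 0" "q$6 = 0"
    for p q
    using bf_g[OF g gJ that(1,2)] bf_supp[OF that(3-9)] by simp
  have h: "bf s s = 0" "bf s (A7 *\<^sub>v s) = 0" "bf s (A7 *\<^sub>v (A7 *\<^sub>v s)) = 0"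
     "bf (A7 *\<^sub>v s) (A7 *\<^sub>v (A7 *\<^sub>v s)) = 0" "bf (A7 *\<^sub>v (A7 *\<^sub>v s)) (A7 *\<^sub>v (A7 *\<^sub>v s)) = 0"
    unfolding s2 unfolding s1 unfolding s_def
    by (rule B; (simp add: cvc m1c m2c cve m1z m2z))+
  have "s = 0\<^sub>v 7" by (rule finite_part[OF sc h])
  have "ginv *\<^sub>v s = (ginv * g) *\<^sub>v cv" unfolding s_def
    by (rule assoc_mult_mat_vec[OF gi g cvc, symmetric])
  also have "\<dots> = cv" using l cvc by simp
  finally have "ginv *\<^sub>v s = cv" .
  then have "cv$i = 0" if "i < 7" for i
    using mult7[OF gi sc that] \<open>s = 0\<^sub>v 7\<close> by simp
  then have "cv$0 = 0" "cv$1 = 0" "cv$2 = 0" by simp_all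
  then show False using cnz cve by simp
qed

end
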